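(* Let $g\ge1$, $n\ge3$, $k\in\{1,\dots,n\}$, and let $y\in A_g^n$ be a point at which $f_k$ attains its minimum on $A_g^n$. Then $y=y(g,n,i_0)$ for some $i_0\le k$.
   Context: For $g,n\ge1$, $A_g^n\subseteq\mathbb{R}^n$ is the set of $(x_1,\dots,x_n)$ with $x_1\ge\dots\ge x_n\ge0$, $x_1+\dots+x_n=1/g$, and $x_1\cdots x_k\le g(x_{k+1}+\dots+x_n)$ for all $k=1,\dots,n-1$. $f_k(x)=x_1\cdots x_k$ on $A_g^n$. Sylvester sequences: $s_{g,1}=g+1$, $s_{g,k+1}=s_{g,k}(s_{g,k}-1)+1$, $t_{g,k}=s_{g,k}-1$. For $1\le k\le n$, $y(g,n,k)=\big(\tfrac1{s_{g,1}},\dots,\tfrac1{s_{g,k-1}},\tfrac{1}{(n-k+1)t_{g,k}},\dots,\tfrac{1}{(n-k+1)t_{g,k}}\big)\in A_g^n$, the last entry repeated $n-k+1$ times. *)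

theory Defs
  imports "HOL-Analysis.Analysis"
begin

(* Points of R^n are represented as lists of reals of length n;
   the paper's coordinate x_i (1-based) is  x ! (i - 1). *)

definition A :: "nat \<Rightarrow> nat \<Rightarrow> real list set" where
  "A g n = {x. length x = n
     \<and> (\<forall>i. i + 1 < n \<longrightarrow> x ! i \<ge> x ! (i + 1))
     \<and> x ! (n - 1) \<ge> 0
     \<and> sum_list x = 1 / real g
     \<and> (\<forall>k. 1 \<le> k \<and> k \<le> n - 1 \<longrightarrow>
           prod_list (take k x) \<le> real g * sum_list (drop k x))}"

definition f :: "nat \<Rightarrow> real list \<Rightarrow> real" where
  "f k x = prod_list (take k x)"

(* Sylvester sequence: s g 1 = g + 1, s g (k+1) = s g k * (s g k - 1) + 1 *)
fun s :: "nat \<Rightarrow> nat \<Rightarrow> nat" where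
  "s g 0 = g"
| "s g (Suc 0) = g + 1"
| "s g (Suc (Suc k)) = s g (Suc k) * (s g (Suc k) - 1) + 1"

definition t :: "nat \<Rightarrow> nat \<Rightarrow> nat" where
  "t g k = s g k - 1"

definition y :: "nat \<Rightarrow> nat \<Rightarrow> nat \<Rightarrow> real list" where
  "y g n k = map (\<lambda>i. 1 / real (s g (i + 1))) [0..<k - 1]
             @ replicate (n - k + 1) (1 / (real (n - k + 1) * real (t g k)))"

end

theory Submission
  imports Defs
begin

definition AF :: "nat \<Rightarrow> nat \<Rightarrow> (nat \<Rightarrow> real) \<Rightarrow> bool" where
"AF g n p \<longleftrightarrow> (\<forall>i. i+1<n \<longrightarrow> p (i+1) \<le> p i) \<and> 0 \<le> p (n-1) \<and> (\<Sum>i<n. p i) = 1/real g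
   \<and> (\<forall>j. 1\<le>j \<and> j\<le>n-1 \<longrightarrow> (\<Prod>i<j. p i) \<le> real g * (\<Sum>i\<in>{j..<n}. p i))"

lemma prod_take_map: "j \<le> n \<Longrightarrow> prod_list (take j (map p [0..<n])) = (\<Prod>i<j. (p i::real))"
proof -
  assume "j \<le> n"
  then have "take j (map p [0..<n]) = map p [0..<j]" by (simp add: take_map min_def)
  moreover have "prod_list (map p [0..<j]) = (\<Prod>i<j. p i)"
    by (subst prod.distinct_set_conv_list[symmetric]) (auto simp: atLeast0LessThan)
  ultimately show ?thesis by simp
qed

lemma sum_drop_map: "sum_list (drop j (map p [0..<n])) = (\<Sum>i\<in>{j..<n}. (p i::real))"
proof -
  have "drop j (map p [0..<n]) = map p [j..<n]" by (simp add: drop_map)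
  moreover have "sum_list (map p [j..<n]) = (\<Sum>i\<in>{j..<n}. p i)"
    by (subst sum.distinct_set_conv_list[symmetric]) auto
  ultimately show ?thesis by simp
qed

lemma A_iff: assumes "n \<ge> 1" shows "map p [0..<n] \<in> A g n \<longleftrightarrow> AF g n p"
proof -
  have s: "sum_list (map p [0..<n]) = (\<Sum>i<n. p i)"
    using sum_drop_map[of 0 p n] by (simp add: atLeast0LessThan)
  show ?thesis unfolding A_def AF_def mem_Collect_eq
    using assms by (auto simp: s prod_take_map sum_drop_map nth_append)
qed

lemma f_map: "k \<le> n \<Longrightarrow> f k (map p [0..<n]) = (\<Prod>i<k. p i)"
  unfolding f_def by (rule prod_take_map)

lemma AF_mono: assumes "AF g n p" "i \<le> j" "j < n" shows "p j \<le> p i"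
  using assms(2,3)
proof (induction j)
  case 0 then show ?case by simp
next
  case (Suc j)
  show ?case
  proof (cases "i = Suc j")
    case False
    then have "i \<le> j" using Suc by simp
    then have "p j \<le> p i" using Suc by simp
    moreover have "p (j+1) \<le> p j" using assms(1) Suc(3) unfolding AF_def by auto
    ultimately show ?thesis by simp
  qed simp
qed

lemma AF_nonneg: assumes "AF g n p" "i < n" shows "0 \<le> p i"
proof -
  have "p (n-1) \<le> p i" using AF_mono[OF assms(1), of i "n-1"] assms(2) by simp
  then show ?thesis using assms(1) unfolding AF_def by linarith
qed

lemma AF_pos: assumes "AF g n p" "g \<ge> 1" "i < n" shows "0 < p i"
proof (rule ccontr)
  assume "\<not> 0 < p i"
  then have z: "p i = 0" using AF_nonneg[OF assms(1,3)] by simp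
  define j where "j = (LEAST j. p j = 0)"
  have pj: "p j = 0" unfolding j_def using z by (rule LeastI)
  have ji: "j \<le> i" unfolding j_def using z by (rule Least_le)
  have below: "0 < p l" if "l < j" for l
  proof -
    have "p l \<noteq> 0" using not_less_Least[of l "\<lambda>j. p j = 0"] that j_def by simp
    moreover have "0 \<le> p l" using AF_nonneg[OF assms(1)] that ji assms(3) by simp
    ultimately show ?thesis by simp
  qed
  have after: "p l = 0" if "j \<le> l" "l < n" for l
    using AF_mono[OF assms(1) that] AF_nonneg[OF assms(1) that(2)] pj by simp
  show False
  proof (cases "j = 0")
    case True
    then have "(\<Sum>l<n. p l) = 0" using after by simp
    then show False using assms(1,2) unfolding AF_def by simp
  next
    case False
    then have c: "(\<Prod>l<j. p l) \<le> real g * (\<Sum>l\<in>{j..<n}. p l)"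
      using assms(1) ji assms(3) unfolding AF_def by auto
    have "(\<Sum>l\<in>{j..<n}. p l) = 0" using after by simp
    moreover have "(\<Prod>l<j. p l) > 0" using below by (intro prod_pos) auto
    ultimately show False using c by simp
  qed
qed

lemma prod_strict_less:
  fixes a b :: "nat \<Rightarrow> real"
  assumes "finite I" "\<And>i. i \<in> I \<Longrightarrow> 0 < a i" "\<And>i. i \<in> I \<Longrightarrow> a i \<le> b i"
    "ii \<in> I" "a ii < b ii"
  shows "prod a I < prod b I"
proof -
  have "prod a I = a ii * prod a (I - {ii})" using assms by (simp add: prod.remove)
  also have "\<dots> \<le> a ii * prod b (I - {ii})"
    using assms by (intro mult_left_mono prod_mono) (auto intro: less_imp_le)
  also have "\<dots> < b ii * prod b (I - {ii})"
  proof -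
    have "0 < prod b (I - {ii})" using assms by (intro prod_pos) (force intro: less_le_trans)
    then show ?thesis using assms by simp
  qed
  also have "\<dots> = prod b I" using assms by (simp add: prod.remove)
  finally show ?thesis .
qed

definition pert :: "(nat \<Rightarrow> real) \<Rightarrow> (nat \<Rightarrow> real) \<Rightarrow> real \<Rightarrow> nat \<Rightarrow> real" where
  "pert p v e i = p i + e * v i"

lemma ev_slack:
  fixes G :: real
  assumes "(\<Prod>i<j. p i) < G * (\<Sum>i\<in>{j..<n}. p i)"
  shows "\<forall>\<^sub>F e in at 0. (\<Prod>i<j. pert p v e i) < G * (\<Sum>i\<in>{j..<n}. pert p v e i)"
proof -
  have "((\<lambda>e. G * (\<Sum>i\<in>{j..<n}. p i + e * v i) - (\<Prod>i<j. p i + e * v i))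
     \<longlongrightarrow> G * (\<Sum>i\<in>{j..<n}. p i + 0 * v i) - (\<Prod>i<j. p i + 0 * v i)) (at (0::real))"
    by (intro tendsto_intros)
  then have "((\<lambda>e. G * (\<Sum>i\<in>{j..<n}. p i + e * v i) - (\<Prod>i<j. p i + e * v i))
     \<longlongrightarrow> G * (\<Sum>i\<in>{j..<n}. p i) - (\<Prod>i<j. p i)) (at (0::real))" by simp
  from order_tendstoD(1)[OF this, of 0] assms
  show ?thesis unfolding pert_def by (auto elim: eventually_mono)
qed

lemma ev_gap:
  fixes a b :: real
  assumes "a < b"
  shows "\<forall>\<^sub>F e in at 0. a + e * u < b + e * w"
proof -
  have "((\<lambda>e. (b + e * w) - (a + e * u)) \<longlongrightarrow> (b + 0 * w) - (a + 0 * u)) (at (0::real))"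
    by (intro tendsto_intros)
  then have "((\<lambda>e. (b + e * w) - (a + e * u)) \<longlongrightarrow> b - a) (at (0::real))" by simp
  from order_tendstoD(1)[OF this, of 0] assms show ?thesis by (auto elim: eventually_mono)
qed

lemma ev_order:
  assumes "\<forall>i. i+1<n \<longrightarrow> p (i+1) \<le> p i"
    and "\<forall>i. i+1<n \<longrightarrow> v (i+1) \<le> v i \<or> p (i+1) < p i"
  shows "\<forall>\<^sub>F e in at 0. 0 \<le> e \<longrightarrow> (\<forall>i. i+1<n \<longrightarrow> pert p v e (i+1) \<le> pert p v e i)"
proof -
  have "\<forall>\<^sub>F e in at 0. \<forall>i\<in>{..<n}. 0 \<le> e \<longrightarrow> (i+1<n \<longrightarrow> pert p v e (i+1) \<le> pert p v e i)"
  proof (rule eventually_ball_finite, simp, intro ballI)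
    fix i assume "i \<in> {..<n}"
    show "\<forall>\<^sub>F e in at 0. 0 \<le> e \<longrightarrow> (i+1<n \<longrightarrow> pert p v e (i+1) \<le> pert p v e i)"
    proof (cases "i+1<n")
      case True
      then consider "v (i+1) \<le> v i" | "p (i+1) < p i" using assms(2) by blast
      then show ?thesis
      proof cases
        case 1
        have "pert p v e (i+1) \<le> pert p v e i" if "0 \<le> e" for e
          using assms(1) True 1 that mult_left_mono[OF 1 that] unfolding pert_def by force
        then show ?thesis by (auto intro: always_eventually)
      next
        case 2
        from ev_gap[OF 2, of "v (i+1)" "v i"] show ?thesis
          by (auto elim: eventually_mono simp: pert_def)
      qed
    qed (auto intro: always_eventually)
  qed
  then show ?thesis by (auto elim!: eventually_mono)
qed

lemma two_sided:
  assumes "AF g n (pert p v e)" "AF g n (pert p v (-e))" "g \<ge> 1" "0 < k" "k \<le> n" "v 0 \<noteq> 0" "e \<noteq> 0"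
    "AF g n p" "\<forall>q. AF g n q \<longrightarrow> (\<Prod>i<k. p i) \<le> (\<Prod>i<k. q i)"
  shows False
proof -
  have pp: "0 < pert p v e i" "0 < pert p v (-e) i" "0 < p i" if "i < k" for i
    using AF_pos[OF assms(1,3)] AF_pos[OF assms(2,3)] AF_pos[OF assms(8,3)] that assms(5) by auto
  have "(\<Prod>i<k. pert p v e i) * (\<Prod>i<k. pert p v (-e) i) = (\<Prod>i<k. pert p v e i * pert p v (-e) i)"
    by (simp add: prod.distrib)
  also have "\<dots> < (\<Prod>i<k. p i * p i)"
  proof (rule prod_strict_less[where ii=0])
    show "0 < pert p v e i * pert p v (- e) i" if "i \<in> {..<k}" for i using pp that by simp
    show "pert p v e i * pert p v (- e) i \<le> p i * p i" if "i \<in> {..<k}" for i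
    proof -
      have "0 \<le> (e * v i) * (e * v i)" by simp
      then show ?thesis unfolding pert_def by (simp add: algebra_simps)
    qed
    have "0 < (e * v 0) * (e * v 0)" using assms(6,7) by (simp only: power2_eq_square[symmetric] zero_less_power2) simp
    then show "pert p v e 0 * pert p v (- e) 0 < p 0 * p 0"
      unfolding pert_def by (simp add: algebra_simps)
  qed (use assms in auto)
  also have "\<dots> = (\<Prod>i<k. p i) * (\<Prod>i<k. p i)" by (simp add: prod.distrib)
  finally have lt: "(\<Prod>i<k. pert p v e i) * (\<Prod>i<k. pert p v (-e) i) < (\<Prod>i<k. p i) * (\<Prod>i<k. p i)" .
  have "(\<Prod>i<k. p i) \<le> (\<Prod>i<k. pert p v e i)" "(\<Prod>i<k. p i) \<le> (\<Prod>i<k. pert p v (-e) i)"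
    using assms(1,2,9) by auto
  moreover have "0 \<le> (\<Prod>i<k. p i)" using pp by (intro prod_nonneg) (auto intro: less_imp_le)
  ultimately have "(\<Prod>i<k. p i) * (\<Prod>i<k. p i) \<le> (\<Prod>i<k. pert p v e i) * (\<Prod>i<k. pert p v (-e) i)"
    by (intro mult_mono) auto
  then show False using lt by simp
qed

lemma AF_pert:
  assumes "AF g n p" "(\<Sum>i<n. v i) = 0"
    "\<forall>i. i+1<n \<longrightarrow> pert p v e (i+1) \<le> pert p v e i" "0 \<le> pert p v e (n-1)"
    "\<forall>j. 1\<le>j \<and> j\<le>n-1 \<longrightarrow> (\<Prod>i<j. pert p v e i) \<le> real g * (\<Sum>i\<in>{j..<n}. pert p v e i)"
  shows "AF g n (pert p v e)"
proof -
  have "(\<Sum>i<n. pert p v e i) = (\<Sum>i<n. p i) + e * (\<Sum>i<n. v i)"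
    unfolding pert_def by (simp add: sum.distrib sum_distrib_left)
  then show ?thesis using assms unfolding AF_def by simp
qed

lemma ev_slack_all:
  fixes G :: real
  assumes "finite J" "\<forall>j\<in>J. (\<Prod>i<j. p i) < G * (\<Sum>i\<in>{j..<n}. p i)"
  shows "\<forall>\<^sub>F e in at 0. \<forall>j\<in>J. (\<Prod>i<j. pert p v e i) < G * (\<Sum>i\<in>{j..<n}. pert p v e i)"
  using assms by (intro eventually_ball_finite) (auto intro: ev_slack)

lemma ev_pos_all:
  assumes "\<forall>i<n. 0 < p i"
  shows "\<forall>\<^sub>F e in at 0. \<forall>i\<in>{..<n}. 0 < pert p v e i"
proof (intro eventually_ball_finite ballI)
  fix i assume "i \<in> {..<n}"
  then have "0 + e * 0 < p i" for e using assms by simp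
  from ev_gap[of 0 "p i" 0 "v i"] assms \<open>i \<in> {..<n}\<close>
  show "\<forall>\<^sub>F e in at 0. 0 < pert p v e i" by (auto simp: pert_def)
qed simp

lemma prod_two:
  fixes h :: "nat \<Rightarrow> real"
  assumes "finite I" "a \<in> I" "b \<in> I" "a \<noteq> b"
  shows "prod h I = h a * h b * prod h (I - {a, b})"
proof -
  have "prod h I = h a * prod h (I - {a})" using assms by (simp add: prod.remove)
  also have "prod h (I - {a}) = h b * prod h (I - {a} - {b})" using assms by (simp add: prod.remove)
  also have "I - {a} - {b} = I - {a, b}" by auto
  finally show ?thesis by (simp add: mult.assoc)
qed

locale nu =
  fixes g n :: nat and p :: "nat \<Rightarrow> real"
  assumes af: "AF g n p" and g1: "g \<ge> 1" and nonu: "p (n-1) < p 0"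
begin

lemma n2: "n \<ge> 2"
proof (rule ccontr)
  assume "\<not> n \<ge> 2" then have "n - 1 = 0" by simp
  then show False using nonu by simp
qed

lemma pos: "i < n \<Longrightarrow> 0 < p i" using AF_pos[OF af g1] .

lemma mono: "i \<le> j \<Longrightarrow> j < n \<Longrightarrow> p j \<le> p i" using AF_mono[OF af] .

definition a where "a = (LEAST i. p i < p 0)"
definition pl where "pl = (LEAST i. p i = p (n-1))"

lemma pa: "p a < p 0" unfolding a_def using nonu by (rule LeastI)
lemma a_le: "a \<le> n - 1" unfolding a_def using nonu by (rule Least_le)
lemma a_before: "i < a \<Longrightarrow> p i = p 0"
proof -
  assume "i < a"
  then have "\<not> p i < p 0" using not_less_Least[of i "\<lambda>i. p i < p 0"] a_def by simp
  moreover have "p i \<le> p 0" using mono[of 0 i] \<open>i < a\<close> a_le n2 by simp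
  ultimately show ?thesis by simp
qed
lemma a1: "a \<ge> 1" using pa by (cases a) auto

lemma p_pl: "p pl = p (n-1)" unfolding pl_def by (rule LeastI) simp
lemma pl_le: "pl \<le> n - 1" unfolding pl_def by (rule Least_le) simp
lemma pl_before: "i < pl \<Longrightarrow> p (n-1) < p i"
proof -
  assume "i < pl"
  then have "p i \<noteq> p (n-1)" using not_less_Least[of i "\<lambda>i. p i = p (n-1)"] pl_def by simp
  moreover have "p (n-1) \<le> p i" using mono[of i "n-1"] \<open>i < pl\<close> pl_le n2 by simp
  ultimately show ?thesis by simp
qed
lemma pl_after: "pl \<le> i \<Longrightarrow> i < n \<Longrightarrow> p i = p (n-1)"
  using mono[of pl i] mono[of i "n-1"] p_pl by simp
lemma a_le_pl: "a \<le> pl" unfolding a_def using p_pl nonu by (intro Least_le) simp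
lemma pl1: "pl \<ge> 1" using p_pl nonu by (cases pl) auto

lemma sum_gt: "real n * p (n-1) < 1 / real g"
proof -
  have "(\<Sum>i<n. p (n-1)) < (\<Sum>i<n. p i)"
  proof (rule sum_strict_mono_ex1)
    show "\<forall>x\<in>{..<n}. p (n - 1) \<le> p x" using mono by auto
    show "\<exists>x\<in>{..<n}. p (n - 1) < p x" using nonu n2 by (intro bexI[of _ 0]) auto
  qed simp
  then show ?thesis using af unfolding AF_def by simp
qed

lemma lemT:
  assumes "pl < j" "j \<le> n - 1"
  shows "(\<Prod>i<j. p i) < real g * (\<Sum>i\<in>{j..<n}. p i)"
proof -
  define c where "c = p (n-1)"
  have c0: "0 < c" unfolding c_def using pos n2 by simp
  have gpos: "0 < real g" using g1 by simp
  have "1 / real g \<le> 1" using g1 by simp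
  then have nc: "real n * c < 1" using sum_gt unfolding c_def by linarith
  have "c \<le> real n * c" using c0 n2 by (intro mult_le_cancel_right1[THEN iffD2]) auto
  then have c1: "c \<le> 1" using nc by linarith
  have split: "{..<j} = {..<pl} \<union> {pl..<j}" using assms by auto
  have "(\<Prod>i<j. p i) = (\<Prod>i<pl. p i) * (\<Prod>i\<in>{pl..<j}. p i)"
    unfolding split by (rule prod.union_disjoint) auto
  also have "(\<Prod>i\<in>{pl..<j}. p i) = c ^ (j - pl)"
  proof -
    have "(\<Prod>i\<in>{pl..<j}. p i) = (\<Prod>i\<in>{pl..<j}. c)"
      unfolding c_def by (intro prod.cong refl pl_after) (use assms in auto)
    then show ?thesis by simp
  qed
  finally have P: "(\<Prod>i<j. p i) = (\<Prod>i<pl. p i) * c ^ (j - pl)" .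
  have S: "(\<Sum>i\<in>{j..<n}. p i) = real (n - j) * c"
  proof -
    have "(\<Sum>i\<in>{j..<n}. p i) = (\<Sum>i\<in>{j..<n}. c)"
      unfolding c_def by (intro sum.cong refl pl_after) (use assms in auto)
    then show ?thesis by simp
  qed
  have Spl: "(\<Sum>i\<in>{pl..<n}. p i) = real (n - pl) * c"
  proof -
    have "(\<Sum>i\<in>{pl..<n}. p i) = (\<Sum>i\<in>{pl..<n}. c)"
      unfolding c_def by (intro sum.cong refl pl_after) auto
    then show ?thesis by simp
  qed
  have "(\<Prod>i<pl. p i) \<le> real g * (\<Sum>i\<in>{pl..<n}. p i)"
    using af pl1 pl_le unfolding AF_def by blast
  then have Cpl: "(\<Prod>i<pl. p i) \<le> real g * (real (n - pl) * c)" unfolding Spl .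
  have cp: "c ^ (j - pl) \<le> c"
    using power_decreasing[of 1 "j-pl" c] c0 c1 assms by simp
  have "0 \<le> (\<Prod>i<pl. p i)" using pos pl_le n2 by (intro prod_nonneg) (auto intro: less_imp_le)
  then have "(\<Prod>i<j. p i) \<le> real g * (real (n - pl) * c) * c"
    unfolding P using Cpl cp c0 gpos by (intro mult_mono) auto
  also have "\<dots> < real g * (real (n - j) * c)"
  proof -
    have "real (n - pl) * c \<le> real n * c" using c0 by (intro mult_right_mono) auto
    also have "\<dots> < 1" by (rule nc)
    also have "1 \<le> real (n - j)" using assms by simp
    finally have "real (n - pl) * c < real (n - j)" .
    then have "real (n - pl) * c * c < real (n - j) * c" using c0 by simp
    then show ?thesis using gpos by (simp add: mult.assoc)
  qed
  finally show ?thesis unfolding S .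
qed


definition vb :: "nat \<Rightarrow> real" where
  "vb i = (if i < a then 1 / real a else if pl \<le> i then - 1 / real (n - pl) else 0)"

lemma sum_vb: "(\<Sum>i<n. vb i) = 0"
proof -
  have u: "{..<n} = ({..<a} \<union> {a..<pl}) \<union> {pl..<n}" using a_le_pl pl_le n2 by auto
  have "(\<Sum>i<n. vb i) = sum vb ({..<a} \<union> {a..<pl}) + sum vb {pl..<n}"
    unfolding u by (rule sum.union_disjoint) (use a_le_pl in auto)
  also have "sum vb ({..<a} \<union> {a..<pl}) = sum vb {..<a} + sum vb {a..<pl}"
    by (rule sum.union_disjoint) auto
  finally have "(\<Sum>i<n. vb i) = (\<Sum>i<a. vb i) + (\<Sum>i\<in>{a..<pl}. vb i) + (\<Sum>i\<in>{pl..<n}. vb i)" .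
  also have "(\<Sum>i<a. vb i) = (\<Sum>i<a. 1 / real a)" by (intro sum.cong) (auto simp: vb_def)
  also have "\<dots> = 1" using a1 by simp
  also have "(\<Sum>i\<in>{a..<pl}. vb i) = 0" by (intro sum.neutral) (auto simp: vb_def)
  also have "(\<Sum>i\<in>{pl..<n}. vb i) = (\<Sum>i\<in>{pl..<n}. - 1 / real (n - pl))"
    using a_le_pl by (intro sum.cong) (auto simp: vb_def)
  also have "\<dots> = -1" using pl_le n2 by simp
  finally show ?thesis by simp
qed

lemma vb_step: "i+1 < n \<Longrightarrow> vb (i+1) = vb i \<or> p (i+1) < p i"
proof -
  assume i: "i+1 < n"
  consider "i+1 = a" | "i+1 = pl" | "i+1 < a" | "a < i+1" "i+1 < pl" | "pl < i+1" by linarith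
  then show ?thesis
  proof cases
    case 1 then show ?thesis using pa a_before[of i] by simp
  next
    case 2 then show ?thesis using pl_before[of i] p_pl by simp
  qed (use a_le_pl in \<open>auto simp: vb_def\<close>)
qed

lemma vb_neg_step: "i+1 < n \<Longrightarrow> (- vb (i+1)) \<le> - vb i \<or> p (i+1) < p i"
  using vb_step by force

lemma ev_block:
  "\<forall>\<^sub>F e in at 0. (0 \<le> e \<longrightarrow> (\<forall>i. i+1<n \<longrightarrow> pert p vb e (i+1) \<le> pert p vb e i))
     \<and> (0 \<le> e \<longrightarrow> (\<forall>i. i+1<n \<longrightarrow> pert p (\<lambda>i. - vb i) e (i+1) \<le> pert p (\<lambda>i. - vb i) e i))
     \<and> (\<forall>i\<in>{..<n}. 0 < pert p vb e i) \<and> (\<forall>i\<in>{..<n}. 0 < pert p (\<lambda>i. - vb i) e i)"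
proof -
  have o: "\<forall>i. i+1<n \<longrightarrow> p (i+1) \<le> p i" using af unfolding AF_def by auto
  have "\<forall>i. i+1<n \<longrightarrow> vb (i+1) \<le> vb i \<or> p (i+1) < p i" using vb_step by force
  note e1 = ev_order[OF o this]
  have "\<forall>i. i+1<n \<longrightarrow> - vb (i+1) \<le> - vb i \<or> p (i+1) < p i" using vb_step by force
  note e2 = ev_order[OF o this]
  have pp: "\<forall>i<n. 0 < p i" using pos by auto
  show ?thesis using e1 e2 ev_pos_all[OF pp, of vb] ev_pos_all[OF pp, of "\<lambda>i. - vb i"]
    by eventually_elim auto
qed

lemma pert_neg: "pert p (\<lambda>i. - v i) e = pert p v (-e)"
  unfolding pert_def by auto

lemma M3:
  assumes "\<forall>q. AF g n q \<longrightarrow> (\<Prod>i<k. p i) \<le> (\<Prod>i<k. q i)" "1 \<le> k" "k \<le> n"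
    "\<forall>j. 1\<le>j \<and> j\<le>n-1 \<longrightarrow> (\<Prod>i<j. p i) < real g * (\<Sum>i\<in>{j..<n}. p i)"
  shows False
proof -
  have sl: "\<forall>j\<in>{1..n-1}. (\<Prod>i<j. p i) < real g * (\<Sum>i\<in>{j..<n}. p i)" using assms(4) by auto
  have "\<forall>\<^sub>F e in at 0. ((0 \<le> e \<longrightarrow> (\<forall>i. i+1<n \<longrightarrow> pert p vb e (i+1) \<le> pert p vb e i))
     \<and> (0 \<le> e \<longrightarrow> (\<forall>i. i+1<n \<longrightarrow> pert p (\<lambda>i. - vb i) e (i+1) \<le> pert p (\<lambda>i. - vb i) e i))
     \<and> (\<forall>i\<in>{..<n}. 0 < pert p vb e i) \<and> (\<forall>i\<in>{..<n}. 0 < pert p (\<lambda>i. - vb i) e i))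
     \<and> (\<forall>j\<in>{1..n-1}. (\<Prod>i<j. pert p vb e i) < real g * (\<Sum>i\<in>{j..<n}. pert p vb e i))
     \<and> (\<forall>j\<in>{1..n-1}. (\<Prod>i<j. pert p (\<lambda>i. - vb i) e i) < real g * (\<Sum>i\<in>{j..<n}. pert p (\<lambda>i. - vb i) e i))"
    using ev_block ev_slack_all[OF finite_atLeastAtMost sl, of vb] ev_slack_all[OF finite_atLeastAtMost sl, of "\<lambda>i. - vb i"]
    by eventually_elim auto
  then obtain d where d: "d > 0" and H: "\<And>x. x \<noteq> 0 \<Longrightarrow> dist x 0 < d \<Longrightarrow>
     ((0 \<le> x \<longrightarrow> (\<forall>i. i+1<n \<longrightarrow> pert p vb x (i+1) \<le> pert p vb x i))
     \<and> (0 \<le> x \<longrightarrow> (\<forall>i. i+1<n \<longrightarrow> pert p (\<lambda>i. - vb i) x (i+1) \<le> pert p (\<lambda>i. - vb i) x i))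
     \<and> (\<forall>i\<in>{..<n}. 0 < pert p vb x i) \<and> (\<forall>i\<in>{..<n}. 0 < pert p (\<lambda>i. - vb i) x i))
     \<and> (\<forall>j\<in>{1..n-1}. (\<Prod>i<j. pert p vb x i) < real g * (\<Sum>i\<in>{j..<n}. pert p vb x i))
     \<and> (\<forall>j\<in>{1..n-1}. (\<Prod>i<j. pert p (\<lambda>i. - vb i) x i) < real g * (\<Sum>i\<in>{j..<n}. pert p (\<lambda>i. - vb i) x i))"
    unfolding eventually_at by auto
  define e where "e = d / 2"
  have e: "e \<noteq> 0" "dist e 0 < d" "0 \<le> e" using d by (auto simp: e_def dist_real_def)
  note He = H[OF e(1,2)]
  have s1: "(\<Sum>i<n. vb i) = 0" by (rule sum_vb)
  have s2: "(\<Sum>i<n. - vb i) = 0" using sum_vb by (simp add: sum_negf)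
  have A1: "AF g n (pert p vb e)"
    by (rule AF_pert[OF af s1]) (use He e n2 in \<open>auto intro: less_imp_le\<close>)
  have A2: "AF g n (pert p (\<lambda>i. - vb i) e)"
    by (rule AF_pert[OF af s2]) (use He e n2 in \<open>auto intro: less_imp_le\<close>)
  have "vb 0 \<noteq> 0" using a1 by (simp add: vb_def)
  then show False using two_sided[OF A1 A2[unfolded pert_neg] g1 _ assms(3) _ e(1) af assms(1)] assms(2)
    by simp
qed


lemma vb_nonneg: "i < pl \<Longrightarrow> 0 \<le> vb i"
  by (auto simp: vb_def)

lemma M1:
  assumes "\<forall>q. AF g n q \<longrightarrow> (\<Prod>i<k. p i) \<le> (\<Prod>i<k. q i)" "1 \<le> k" "k \<le> pl"
  shows False
proof -
  have sl: "\<forall>j\<in>{pl+1..n-1}. (\<Prod>i<j. p i) < real g * (\<Sum>i\<in>{j..<n}. p i)" using lemT by auto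
  have "\<forall>\<^sub>F e in at 0. ((0 \<le> e \<longrightarrow> (\<forall>i. i+1<n \<longrightarrow> pert p vb e (i+1) \<le> pert p vb e i))
     \<and> (0 \<le> e \<longrightarrow> (\<forall>i. i+1<n \<longrightarrow> pert p (\<lambda>i. - vb i) e (i+1) \<le> pert p (\<lambda>i. - vb i) e i))
     \<and> (\<forall>i\<in>{..<n}. 0 < pert p vb e i) \<and> (\<forall>i\<in>{..<n}. 0 < pert p (\<lambda>i. - vb i) e i))
     \<and> (\<forall>j\<in>{pl+1..n-1}. (\<Prod>i<j. pert p (\<lambda>i. - vb i) e i) < real g * (\<Sum>i\<in>{j..<n}. pert p (\<lambda>i. - vb i) e i))"
    using ev_block ev_slack_all[OF finite_atLeastAtMost sl, of "\<lambda>i. - vb i"]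
    by eventually_elim auto
  then obtain d where d: "d > 0" and H: "\<And>x. x \<noteq> 0 \<Longrightarrow> dist x 0 < d \<Longrightarrow>
     ((0 \<le> x \<longrightarrow> (\<forall>i. i+1<n \<longrightarrow> pert p vb x (i+1) \<le> pert p vb x i))
     \<and> (0 \<le> x \<longrightarrow> (\<forall>i. i+1<n \<longrightarrow> pert p (\<lambda>i. - vb i) x (i+1) \<le> pert p (\<lambda>i. - vb i) x i))
     \<and> (\<forall>i\<in>{..<n}. 0 < pert p vb x i) \<and> (\<forall>i\<in>{..<n}. 0 < pert p (\<lambda>i. - vb i) x i))
     \<and> (\<forall>j\<in>{pl+1..n-1}. (\<Prod>i<j. pert p (\<lambda>i. - vb i) x i) < real g * (\<Sum>i\<in>{j..<n}. pert p (\<lambda>i. - vb i) x i))"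
    unfolding eventually_at by auto
  define e where "e = d / 2"
  have e: "e \<noteq> 0" "dist e 0 < d" "0 < e" using d by (auto simp: e_def dist_real_def)
  note He = H[OF e(1,2)]
  define z where "z = pert p (\<lambda>i. - vb i) e"
  have zpos: "\<And>i. i < n \<Longrightarrow> 0 < z i" using He unfolding z_def by auto
  have zle: "\<And>i. i < pl \<Longrightarrow> z i \<le> p i"
    unfolding z_def pert_def using vb_nonneg e(3) by (simp add: mult_nonneg_nonneg)
  have s2: "(\<Sum>i<n. - vb i) = 0" using sum_vb by (simp add: sum_negf)
  have cons: "(\<Prod>i<j. z i) \<le> real g * (\<Sum>i\<in>{j..<n}. z i)" if j: "1 \<le> j" "j \<le> n-1" for j
  proof (cases "pl < j")
    case True
    then show ?thesis using He j unfolding z_def by (auto intro: less_imp_le)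
  next
    case False
    then have jpl: "j \<le> pl" by simp
    have "(\<Prod>i<j. z i) \<le> (\<Prod>i<j. p i)"
      using zpos zle jpl pl_le n2 by (intro prod_mono) (auto intro: less_imp_le)
    also have "\<dots> \<le> real g * (\<Sum>i\<in>{j..<n}. p i)" using af j unfolding AF_def by blast
    also have "\<dots> \<le> real g * (\<Sum>i\<in>{j..<n}. z i)"
    proof -
      have un: "{..<n} = {..<j} \<union> {j..<n}" using j by auto
      have "(\<Sum>i<n. vb i) = (\<Sum>i<j. vb i) + (\<Sum>i\<in>{j..<n}. vb i)"
        unfolding un by (rule sum.union_disjoint) auto
      moreover have "0 \<le> (\<Sum>i<j. vb i)" using vb_nonneg jpl by (intro sum_nonneg) auto
      ultimately have "(\<Sum>i\<in>{j..<n}. vb i) \<le> 0" using sum_vb by simp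
      then have "0 \<le> e * - (\<Sum>i\<in>{j..<n}. vb i)" using e(3) by (intro mult_nonneg_nonneg) auto
      moreover have "(\<Sum>i\<in>{j..<n}. z i) = (\<Sum>i\<in>{j..<n}. p i) + e * - (\<Sum>i\<in>{j..<n}. vb i)"
        unfolding z_def pert_def by (simp add: sum_subtractf sum_distrib_left)
      ultimately show ?thesis using g1 by simp
    qed
    finally show ?thesis .
  qed
  have Az: "AF g n z" unfolding z_def
    by (rule AF_pert[OF af s2]) (use He e n2 cons[unfolded z_def] in \<open>auto intro: less_imp_le\<close>)
  have "(\<Prod>i<k. z i) < (\<Prod>i<k. p i)"
  proof (rule prod_strict_less[where ii=0])
    show "z 0 < p 0" unfolding z_def pert_def using e(3) a1 by (simp add: vb_def)
  qed (use zpos zle assms(2,3) pl_le n2 in auto)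
  then show False using assms(1) Az by force
qed


lemma M2:
  assumes "\<forall>q. AF g n q \<longrightarrow> (\<Prod>i<k. p i) \<le> (\<Prod>i<k. q i)" "pl < k" "k \<le> n"
    and slack1: "p 0 < real g * (\<Sum>i\<in>{1..<n}. p i)"
    and tight: "\<not> (\<forall>j. 1\<le>j \<and> j\<le>n-1 \<longrightarrow> (\<Prod>i<j. p i) < real g * (\<Sum>i\<in>{j..<n}. p i))"
  shows False
proof -
  define Q where "Q j \<longleftrightarrow> 1\<le>j \<and> j\<le>n-1 \<and> \<not> (\<Prod>i<j. p i) < real g * (\<Sum>i\<in>{j..<n}. p i)" for j
  have ex: "\<exists>j. Q j" using tight unfolding Q_def by auto
  define m where "m = (LEAST j. Q j)"
  have Qm: "Q m" unfolding m_def using ex by (rule LeastI_ex)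
  have before: "\<And>j. 1 \<le> j \<Longrightarrow> j < m \<Longrightarrow> (\<Prod>i<j. p i) < real g * (\<Sum>i\<in>{j..<n}. p i)"
  proof -
    fix j assume "1 \<le> j" "j < m"
    then have "\<not> Q j" using not_less_Least[of j Q] m_def by simp
    then show "(\<Prod>i<j. p i) < real g * (\<Sum>i\<in>{j..<n}. p i)" using \<open>1 \<le> j\<close> \<open>j < m\<close> Qm unfolding Q_def by auto
  qed
  have m1: "1 \<le> m" "m \<le> n - 1" using Qm unfolding Q_def by auto
  have m2: "m \<ge> 2"
  proof (rule ccontr)
    assume "\<not> m \<ge> 2" then have "m = 1" using m1 by simp
    then show False using Qm slack1 unfolding Q_def by simp
  qed
  have mpl: "m \<le> pl"
  proof (rule ccontr)
    assume "\<not> m \<le> pl"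
    then have "(\<Prod>i<m. p i) < real g * (\<Sum>i\<in>{m..<n}. p i)" using lemT m1 by simp
    then show False using Qm unfolding Q_def by simp
  qed
  have Ctight: "(\<Prod>i<m. p i) = real g * (\<Sum>i\<in>{m..<n}. p i)"
    using Qm af m1 unfolding Q_def AF_def by force
  have gap: "p m < p (m-1)"
  proof (rule ccontr)
    assume "\<not> p m < p (m-1)"
    then have eq: "p (m-1) = p m" using mono[of "m-1" m] m1 n2 by simp
    define c where "c = p m"
    define S where "S = (\<Sum>i\<in>{m..<n}. p i)"
    define P where "P = (\<Prod>i<m-1. p i)"
    have c0: "0 < c" using pos m1 n2 unfolding c_def by simp
    have g0: "0 < real g" using g1 by simp
    have Pm: "(\<Prod>i<m. p i) = P * c"
    proof -
      have "{..<m} = insert (m-1) {..<m-1}" using m2 by auto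
      then show ?thesis unfolding P_def c_def using eq by (simp add: mult.commute)
    qed
    have Sm1: "(\<Sum>i\<in>{m-1..<n}. p i) = c + S"
    proof -
      have "{m-1..<n} = insert (m-1) {m..<n}" using m2 m1 n2 by auto
      moreover have "m - 1 \<notin> {m..<n}" using m2 by simp
      ultimately show ?thesis unfolding S_def c_def using eq by simp
    qed
    have sl: "P < real g * (c + S)" using before[of "m-1"] m2 Sm1 unfolding P_def by simp
    have ti: "P * c = real g * S" using Ctight Pm unfolding S_def by simp
    have "P * c < real g * (c + S) * c" using sl c0 by simp
    then have A: "S < (c + S) * c" using ti g0 by (simp add: mult.assoc)
    have Sc: "c \<le> S"
    proof -
      have "S = p m + (\<Sum>i\<in>{m+1..<n}. p i)" unfolding S_def using m1 n2
        by (subst sum.atLeast_Suc_lessThan) auto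
      moreover have "0 \<le> (\<Sum>i\<in>{m+1..<n}. p i)" using pos by (intro sum_nonneg) (auto intro: less_imp_le)
      ultimately show ?thesis unfolding c_def by simp
    qed
    have c2: "2 * c \<le> 1"
    proof -
      have "(\<Sum>i<n. p i) = p (m-1) + p m + (\<Sum>i\<in>{..<n} - {m-1, m}. p i)"
      proof -
        have "(\<Sum>i<n. p i) = p (m-1) + (\<Sum>i\<in>{..<n} - {m-1}. p i)"
          using m1 n2 by (simp add: sum.remove)
        also have "(\<Sum>i\<in>{..<n} - {m-1}. p i) = p m + (\<Sum>i\<in>{..<n} - {m-1} - {m}. p i)"
          using m1 m2 n2 by (intro sum.remove) auto
        also have "{..<n} - {m-1} - {m} = {..<n} - {m-1, m}" by auto
        finally show ?thesis by simp
      qed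
      moreover have "0 \<le> (\<Sum>i\<in>{..<n} - {m-1, m}. p i)" using pos by (intro sum_nonneg) (auto intro: less_imp_le)
      moreover have "1 / real g \<le> 1" using g1 by simp
      ultimately show ?thesis using af eq unfolding AF_def c_def by linarith
    qed
    have "c * c \<le> S * (1 - c)"
    proof -
      have "c * c \<le> c * (1 - c)" using c0 c2 by (intro mult_left_mono) auto
      also have "\<dots> \<le> S * (1 - c)" using Sc c2 by (intro mult_right_mono) auto
      finally show ?thesis .
    qed
    then show False using A by (simp add: algebra_simps)
  qed
  define v where "v i = (if i = 0 then 1 else 0) - (if i = m - 1 then 1 else (0::real))" for i
  have v0: "v 0 = 1" "v (m-1) = -1" using m2 by (auto simp: v_def)
  have sv: "(\<Sum>i<n. v i) = 0" unfolding v_def using m1 n2 by (simp add: sum_subtractf)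
  have o: "\<forall>i. i+1<n \<longrightarrow> p (i+1) \<le> p i" using af unfolding AF_def by auto
  have "\<forall>i. i+1<n \<longrightarrow> v (i+1) \<le> v i \<or> p (i+1) < p i"
  proof (intro allI impI)
    fix i assume "i+1 < n"
    show "v (i+1) \<le> v i \<or> p (i+1) < p i"
    proof (cases "i = m - 1")
      case True then show ?thesis using gap m2 by simp
    qed (auto simp: v_def)
  qed
  note eo = ev_order[OF o this]
  have pp: "\<forall>i<n. 0 < p i" using pos by auto
  have sl: "\<forall>j\<in>{1..m-1}. (\<Prod>i<j. p i) < real g * (\<Sum>i\<in>{j..<n}. p i)" using before m2 by auto
  have "\<forall>\<^sub>F e in at 0. (0 \<le> e \<longrightarrow> (\<forall>i. i+1<n \<longrightarrow> pert p v e (i+1) \<le> pert p v e i))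
     \<and> (\<forall>i\<in>{..<n}. 0 < pert p v e i)
     \<and> (\<forall>j\<in>{1..m-1}. (\<Prod>i<j. pert p v e i) < real g * (\<Sum>i\<in>{j..<n}. pert p v e i))"
    using eo ev_pos_all[OF pp, of v] ev_slack_all[OF finite_atLeastAtMost sl, of v]
    by eventually_elim auto
  then obtain d where d: "d > 0" and H: "\<And>x. x \<noteq> 0 \<Longrightarrow> dist x 0 < d \<Longrightarrow>
     (0 \<le> x \<longrightarrow> (\<forall>i. i+1<n \<longrightarrow> pert p v x (i+1) \<le> pert p v x i))
     \<and> (\<forall>i\<in>{..<n}. 0 < pert p v x i)
     \<and> (\<forall>j\<in>{1..m-1}. (\<Prod>i<j. pert p v x i) < real g * (\<Sum>i\<in>{j..<n}. pert p v x i))"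
    unfolding eventually_at by auto
  define e where "e = d / 2"
  have e: "e \<noteq> 0" "dist e 0 < d" "0 < e" using d by (auto simp: e_def dist_real_def)
  note He = H[OF e(1,2)]
  define z where "z = pert p v e"
  have zpos: "\<And>i. i < n \<Longrightarrow> 0 < z i" using He unfolding z_def by auto
  have zeq: "\<And>i. i \<noteq> 0 \<Longrightarrow> i \<noteq> m - 1 \<Longrightarrow> z i = p i" unfolding z_def pert_def v_def by simp
  have pm: "p (m-1) \<le> p 0" using mono[of 0 "m-1"] m1 n2 by simp
  have key: "z 0 * z (m-1) < p 0 * p (m-1)"
  proof -
    have "z 0 * z (m-1) = (p 0 + e) * (p (m-1) - e)" unfolding z_def pert_def using v0 by simp
    also have "\<dots> = p 0 * p (m-1) - e * (p 0 - p (m-1)) - e * e" by (simp add: algebra_simps)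
    also have "\<dots> < p 0 * p (m-1)"
    proof -
      have "0 \<le> e * (p 0 - p (m-1))" using e(3) pm by simp
      moreover have "0 < e * e" using e(3) by simp
      ultimately show ?thesis by linarith
    qed
    finally show ?thesis .
  qed
  have split: "(\<Prod>i<j. z i) = z 0 * z (m-1) * (\<Prod>i\<in>{..<j} - {0, m-1}. p i)"
    "(\<Prod>i<j. p i) = p 0 * p (m-1) * (\<Prod>i\<in>{..<j} - {0, m-1}. p i)" if "m \<le> j" for j
  proof -
    have "(\<Prod>i<j. z i) = z 0 * z (m-1) * (\<Prod>i\<in>{..<j} - {0, m-1}. z i)"
      using that m2 by (intro prod_two) auto
    also have "(\<Prod>i\<in>{..<j} - {0, m-1}. z i) = (\<Prod>i\<in>{..<j} - {0, m-1}. p i)"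
      using zeq by (intro prod.cong) auto
    finally show "(\<Prod>i<j. z i) = z 0 * z (m-1) * (\<Prod>i\<in>{..<j} - {0, m-1}. p i)" .
    show "(\<Prod>i<j. p i) = p 0 * p (m-1) * (\<Prod>i\<in>{..<j} - {0, m-1}. p i)"
      using that m2 by (intro prod_two) auto
  qed
  have Rpos: "0 < (\<Prod>i\<in>{..<j} - {0, m-1}. p i)" if "j \<le> n" for j
    using pos that by (intro prod_pos) auto
  have cons: "(\<Prod>i<j. z i) \<le> real g * (\<Sum>i\<in>{j..<n}. z i)" if j: "1 \<le> j" "j \<le> n-1" for j
  proof (cases "j < m")
    case True
    then show ?thesis using He j unfolding z_def by (auto intro: less_imp_le)
  next
    case False
    then have jm: "m \<le> j" by simp
    have "(\<Prod>i<j. z i) \<le> (\<Prod>i<j. p i)"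
    proof -
      have "0 < (\<Prod>i\<in>{..<j} - {0, m-1}. p i)" using Rpos[of j] j by simp
      then show ?thesis unfolding split[OF jm] using key by (intro mult_right_mono) auto
    qed
    also have "\<dots> \<le> real g * (\<Sum>i\<in>{j..<n}. p i)" using af j unfolding AF_def by blast
    also have "(\<Sum>i\<in>{j..<n}. p i) = (\<Sum>i\<in>{j..<n}. z i)"
      using zeq jm m2 by (intro sum.cong) auto
    finally show ?thesis .
  qed
  have Az: "AF g n z" unfolding z_def
    by (rule AF_pert[OF af sv]) (use He e n2 cons[unfolded z_def] in \<open>auto intro: less_imp_le\<close>)
  have "(\<Prod>i<k. z i) < (\<Prod>i<k. p i)"
  proof -
    have km: "m \<le> k" using mpl assms(2) by simp
    have "0 < (\<Prod>i\<in>{..<k} - {0, m-1}. p i)" using Rpos[of k] assms(3) by simp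
    then show ?thesis unfolding split[OF km] using key by simp
  qed
  then show False using assms(1) Az by force
qed

end


lemma s_ge1: "g \<ge> 1 \<Longrightarrow> s g j \<ge> 1"
proof (cases j)
  case (Suc j')
  then show ?thesis by (cases j') auto
qed simp

lemma t2: "t g 2 = (g + 1) * g"
  by (simp add: t_def numeral_2_eq_2)

lemma s_shift: "g \<ge> 1 \<Longrightarrow> s (t g 2) (Suc j) = s g (Suc (Suc j))"
proof (induction j)
  case 0
  have "s g 2 \<ge> 1" using s_ge1[OF 0] by simp
  then show ?case by (simp add: t_def numeral_2_eq_2)
next
  case (Suc j)
  then show ?case by simp
qed

lemma t_shift: "g \<ge> 1 \<Longrightarrow> 1 \<le> i0 \<Longrightarrow> t (t g 2) i0 = t g (Suc i0)"
  using s_shift[of g "i0 - 1"] by (simp add: t_def)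

definition Y :: "nat \<Rightarrow> nat \<Rightarrow> nat \<Rightarrow> nat \<Rightarrow> real" where
  "Y g n i0 i = (if i < i0 - 1 then 1 / real (s g (i+1)) else 1 / (real (n - i0 + 1) * real (t g i0)))"

lemma y_map: "1 \<le> i0 \<Longrightarrow> i0 \<le> n \<Longrightarrow> y g n i0 = map (Y g n i0) [0..<n]"
  unfolding y_def Y_def
  by (rule nth_equalityI) (auto simp: nth_append simp del: replicate.simps)

lemma Y_shift:
  assumes "g \<ge> 1" "1 \<le> i0" "i0 \<le> n"
  shows "Y g (Suc n) (Suc i0) (Suc i) = Y (t g 2) n i0 i" "Y g (Suc n) (Suc i0) 0 = 1 / (real g + 1)"
proof -
  show "Y g (Suc n) (Suc i0) 0 = 1 / (real g + 1)" using assms by (simp add: Y_def)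
  have e: "Suc n - Suc i0 + 1 = n - i0 + 1" using assms by simp
  show "Y g (Suc n) (Suc i0) (Suc i) = Y (t g 2) n i0 i"
    unfolding Y_def using assms s_shift[OF assms(1), of i] t_shift[OF assms(1,2)] e
    by (auto simp del: Suc_diff_Suc)
qed


lemma frac_id: "(G::real) > 0 \<Longrightarrow> 1 / (G + 1) + 1 / ((G + 1) * G) = 1 / G"
proof -
  assume G: "G > 0"
  have a: "1 / ((G + 1) * G) = (1 / G) * (1 / (G + 1))" by simp
  have "1 / (G + 1) + (1 / G) * (1 / (G + 1)) = (1 + 1/G) * (1 / (G + 1))" by (simp only: distrib_right mult_1_left)
  also have "1 + 1/G = (G + 1) / G" using G by (simp add: field_simps)
  also have "(G + 1) / G * (1 / (G + 1)) = 1 / G" using G by simp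
  finally show ?thesis unfolding a .
qed

lemma real_t2: "real (t g 2) = (real g + 1) * real g"
  by (simp add: t2 algebra_simps)

lemma rec_down:
  assumes af: "AF g (Suc n) p" and g1: "g \<ge> 1" and n1: "n \<ge> 1"
    and tight: "p 0 = real g * (\<Sum>i\<in>{1..<Suc n}. p i)"
  shows "p 0 = 1 / (real g + 1)" "AF (t g 2) n (\<lambda>i. p (Suc i))"
proof -
  have S: "(\<Sum>i<Suc n. p i) = p 0 + (\<Sum>i<n. p (Suc i))" by (rule sum.lessThan_Suc_shift)
  have S1: "(\<Sum>i\<in>{1..<Suc n}. p i) = (\<Sum>i<n. p (Suc i))"
    using sum.shift_bounds_Suc_ivl[of p 0 n] by (simp add: atLeast0LessThan)
  have tot: "(\<Sum>i<Suc n. p i) = 1 / real g" using af unfolding AF_def by simp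
  have g0: "real g > 0" using g1 by simp
  have rest: "(\<Sum>i<n. p (Suc i)) = 1 / real g - p 0" using S tot by simp
  have "p 0 = real g * (1 / real g - p 0)" using tight S1 rest by simp
  then have "p 0 * (real g + 1) = 1" using g0 by (simp add: algebra_simps)
  then show p0: "p 0 = 1 / (real g + 1)" using g0 by (simp add: field_simps)
  have rest2: "(\<Sum>i<n. p (Suc i)) = 1 / real (t g 2)"
    unfolding rest p0 real_t2 using g0 by (simp add: field_simps)
  show "AF (t g 2) n (\<lambda>i. p (Suc i))"
    unfolding AF_def
  proof (intro conjI allI impI)
    fix i assume "i + 1 < n" then show "p (Suc (i + 1)) \<le> p (Suc i)" using af unfolding AF_def by auto
  next
    show "0 \<le> p (Suc (n - 1))" using af n1 unfolding AF_def by simp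
  next
    show "(\<Sum>i<n. p (Suc i)) = 1 / real (t g 2)" by (rule rest2)
  next
    fix j assume j: "1 \<le> j \<and> j \<le> n - 1"
    have "\<forall>j. 1 \<le> j \<and> j \<le> Suc n - 1 \<longrightarrow> (\<Prod>i<j. p i) \<le> real g * (\<Sum>i\<in>{j..<Suc n}. p i)"
      using af unfolding AF_def by blast
    moreover have "1 \<le> Suc j \<and> Suc j \<le> Suc n - 1" using j by arith
    ultimately have c: "(\<Prod>i<Suc j. p i) \<le> real g * (\<Sum>i\<in>{Suc j..<Suc n}. p i)"
      by blast
    have "(\<Prod>i<Suc j. p i) = p 0 * (\<Prod>i<j. p (Suc i))" by (rule prod.lessThan_Suc_shift)
    moreover have "(\<Sum>i\<in>{Suc j..<Suc n}. p i) = (\<Sum>i\<in>{j..<n}. p (Suc i))" by (rule sum.shift_bounds_Suc_ivl)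
    ultimately have "(\<Prod>i<j. p (Suc i)) / (real g + 1) \<le> real g * (\<Sum>i\<in>{j..<n}. p (Suc i))"
      using c p0 by simp
    then show "(\<Prod>i<j. p (Suc i)) \<le> real (t g 2) * (\<Sum>i\<in>{j..<n}. p (Suc i))"
      unfolding real_t2 using g0 by (simp add: field_simps)
  qed
qed

definition cns :: "real \<Rightarrow> (nat \<Rightarrow> real) \<Rightarrow> nat \<Rightarrow> real" where
  "cns c q i = (case i of 0 \<Rightarrow> c | Suc j \<Rightarrow> q j)"

lemma cns_simps[simp]: "cns c q 0 = c" "cns c q (Suc j) = q j"
  by (simp_all add: cns_def)

lemma rec_up:
  assumes aq: "AF (t g 2) n q" and g1: "g \<ge> 1" and n1: "n \<ge> 1"
  shows "AF g (Suc n) (cns (1 / (real g + 1)) q)"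
proof -
  have g0: "real g > 0" using g1 by simp
  have sq: "(\<Sum>i<n. q i) = 1 / ((real g + 1) * real g)"
    using aq unfolding AF_def real_t2 by simp
  have q0: "q 0 \<le> 1 / (real g + 1)"
  proof -
    have "q 0 \<le> (\<Sum>i<n. q i)"
      using AF_nonneg[OF aq] n1 by (intro member_le_sum) auto
    also have "\<dots> \<le> 1 / (real g + 1)" unfolding sq
    proof (rule divide_left_mono)
      have "(real g + 1) * 1 \<le> (real g + 1) * real g" using g1 by (intro mult_left_mono) auto
      then show "real g + 1 \<le> (real g + 1) * real g" by simp
    qed (use g0 in auto)
    finally show ?thesis .
  qed
  show ?thesis unfolding AF_def
  proof (intro conjI allI impI)
    fix i assume i: "i + 1 < Suc n"
    show "cns (1 / (real g + 1)) q (i + 1) \<le> cns (1 / (real g + 1)) q i"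
    proof (cases i)
      case 0 then show ?thesis using q0 by simp
    next
      case (Suc i') then show ?thesis using aq i unfolding AF_def by auto
    qed
  next
    show "0 \<le> cns (1 / (real g + 1)) q (Suc n - 1)"
      using AF_nonneg[OF aq, of "n-1"] n1 by (cases n) auto
  next
    have X: "(\<Sum>i<Suc n. cns (1 / (real g + 1)) q i) = 1 / (real g + 1) + (\<Sum>i<n. q i)"
      by (subst sum.lessThan_Suc_shift) simp
    have Y: "1 / (real g + 1) + 1 / ((real g + 1) * real g) = 1 / real g"
      using frac_id[OF g0] .
    show "(\<Sum>i<Suc n. cns (1 / (real g + 1)) q i) = 1 / real g"
      by (simp only: X sq Y)
  next
    fix j assume j: "1 \<le> j \<and> j \<le> Suc n - 1"
    then obtain j' where j': "j = Suc j'" by (cases j) auto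
    have P: "(\<Prod>i<j. cns (1 / (real g + 1)) q i) = 1 / (real g + 1) * (\<Prod>i<j'. q i)"
      unfolding j' by (subst prod.lessThan_Suc_shift) simp
    have S: "(\<Sum>i\<in>{j..<Suc n}. cns (1 / (real g + 1)) q i) = (\<Sum>i\<in>{j'..<n}. q i)"
      unfolding j' by (subst sum.shift_bounds_Suc_ivl) simp
    show "(\<Prod>i<j. cns (1 / (real g + 1)) q i) \<le> real g * (\<Sum>i\<in>{j..<Suc n}. cns (1 / (real g + 1)) q i)"
    proof (cases j')
      case 0
      have e: "real g * (1 / ((real g + 1) * real g)) = 1 / (real g + 1)" using g0 by simp
      have "(\<Sum>i\<in>{j'..<n}. q i) = 1 / ((real g + 1) * real g)" using 0 sq by (simp add: atLeast0LessThan)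
      then show ?thesis unfolding P S using 0 e by simp
    next
      case (Suc j'')
      have "\<forall>j. 1 \<le> j \<and> j \<le> n - 1 \<longrightarrow> (\<Prod>i<j. q i) \<le> real (t g 2) * (\<Sum>i\<in>{j..<n}. q i)"
        using aq unfolding AF_def by blast
      moreover have "1 \<le> j' \<and> j' \<le> n - 1" using j j' Suc by arith
      ultimately have "(\<Prod>i<j'. q i) \<le> real (t g 2) * (\<Sum>i\<in>{j'..<n}. q i)" by blast
      then show ?thesis unfolding P S real_t2 using g0 by (simp add: field_simps)
    qed
  qed
qed


lemma main:
  "\<forall>g k p. 1 \<le> g \<longrightarrow> 1 \<le> k \<longrightarrow> k \<le> n \<longrightarrow> AF g n p \<longrightarrow>
     (\<forall>q. AF g n q \<longrightarrow> (\<Prod>i<k. p i) \<le> (\<Prod>i<k. q i)) \<longrightarrow>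
     (\<exists>i0. 1 \<le> i0 \<and> i0 \<le> k \<and> (\<forall>i<n. p i = Y g n i0 i))"
proof (induction n)
  case 0
  then show ?case by auto
next
  case (Suc n)
  show ?case
  proof (intro allI impI)
    fix g k p
    assume g1: "1 \<le> g" and k1: "1 \<le> k" and kn: "k \<le> Suc n" and af: "AF g (Suc n) p"
      and mn: "\<forall>q. AF g (Suc n) q \<longrightarrow> (\<Prod>i<k. p i) \<le> (\<Prod>i<k. q i)"
    have o: "p (Suc n - 1) \<le> p 0" using AF_mono[OF af, of 0 "Suc n - 1"] by simp
    show "\<exists>i0. 1 \<le> i0 \<and> i0 \<le> k \<and> (\<forall>i<Suc n. p i = Y g (Suc n) i0 i)"
    proof (cases "p (Suc n - 1) = p 0")
      case True
      have all: "p i = p 0" if "i < Suc n" for i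
        using AF_mono[OF af, of 0 i] AF_mono[OF af, of i n] that True by simp
      have "(\<Sum>i<Suc n. p i) = (\<Sum>i<Suc n. p 0)" by (intro sum.cong refl all) auto
      then have "real (Suc n) * p 0 = 1 / real g" using af unfolding AF_def by simp
      then have eqn: "real (Suc n) * p 0 = 1 / real g" .
      have N: "real (Suc n) \<noteq> 0" by (simp del: of_nat_Suc)
      have "p 0 = (real (Suc n) * p 0) / real (Suc n)" using N by (simp del: of_nat_Suc)
      also have "\<dots> = (1 / real g) / real (Suc n)" unfolding eqn ..
      finally have "p 0 = (1 / real g) / real (Suc n)" .
      then have p0: "p 0 = 1 / (real (Suc n) * real g)"
        by (simp add: mult.commute del: of_nat_Suc)
      have "t g 1 = g" by (simp add: t_def)
      then have "\<forall>i<Suc n. p i = Y g (Suc n) 1 i"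
      proof (intro allI impI)
        fix i assume "t g 1 = g" "i < Suc n"
        then have "Y g (Suc n) 1 i = 1 / (real (Suc n) * real g)" by (simp add: Y_def del: of_nat_Suc)
        then show "p i = Y g (Suc n) 1 i" using all[OF \<open>i < Suc n\<close>] p0 by simp
      qed
      then show ?thesis using k1 by blast
    next
      case False
      then have nonu: "p (Suc n - 1) < p 0" using o by simp
      interpret nu g "Suc n" p by unfold_locales (use af g1 nonu in auto)
      have plk: "pl < k"
      proof (rule ccontr)
        assume "\<not> pl < k"
        then show False using M1[OF mn k1] by simp
      qed
      have n1: "n \<ge> 1" using n2 by simp
      have c1: "p 0 \<le> real g * (\<Sum>i\<in>{1..<Suc n}. p i)"
      proof -
        have "\<forall>j. 1 \<le> j \<and> j \<le> Suc n - 1 \<longrightarrow> (\<Prod>i<j. p i) \<le> real g * (\<Sum>i\<in>{j..<Suc n}. p i)"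
          using af unfolding AF_def by blast
        moreover have "1 \<le> (1::nat) \<and> 1 \<le> Suc n - 1" using n1 by simp
        ultimately have "(\<Prod>i<1. p i) \<le> real g * (\<Sum>i\<in>{1..<Suc n}. p i)" by blast
        then show ?thesis by simp
      qed
      show ?thesis
      proof (cases "p 0 < real g * (\<Sum>i\<in>{1..<Suc n}. p i)")
        case True
        show ?thesis
        proof (cases "\<forall>j. 1\<le>j \<and> j\<le>Suc n-1 \<longrightarrow> (\<Prod>i<j. p i) < real g * (\<Sum>i\<in>{j..<Suc n}. p i)")
          case True
          then show ?thesis using M3[OF mn k1 kn] by blast
        next
          case False
          then show ?thesis using M2[OF mn plk kn \<open>p 0 < _\<close>] by blast
        qed
      next
        case False
        then have tight: "p 0 = real g * (\<Sum>i\<in>{1..<Suc n}. p i)" using c1 by simp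
        note rd = rec_down[OF af g1 n1 tight]
        obtain k' where k': "k = Suc k'" using k1 by (cases k) auto
        have k'1: "1 \<le> k'" using plk pl1 k' by simp
        have g0: "0 < real g" using g1 by simp
        have tg: "1 \<le> t g 2" using g1 by (simp add: t2)
        have mq: "\<forall>q. AF (t g 2) n q \<longrightarrow> (\<Prod>i<k'. p (Suc i)) \<le> (\<Prod>i<k'. q i)"
        proof (intro allI impI)
          fix q assume aq: "AF (t g 2) n q"
          have "(\<Prod>i<k. p i) \<le> (\<Prod>i<k. cns (1 / (real g + 1)) q i)"
            using mn rec_up[OF aq g1 n1] by blast
          moreover have "(\<Prod>i<k. p i) = p 0 * (\<Prod>i<k'. p (Suc i))"
            unfolding k' by (rule prod.lessThan_Suc_shift)
          moreover have "(\<Prod>i<k. cns (1 / (real g + 1)) q i) = 1 / (real g + 1) * (\<Prod>i<k'. q i)"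
            unfolding k' by (subst prod.lessThan_Suc_shift) simp
          ultimately have "1 / (real g + 1) * (\<Prod>i<k'. p (Suc i)) \<le> 1 / (real g + 1) * (\<Prod>i<k'. q i)"
            using rd(1) by simp
          moreover have "0 < 1 / (real g + 1)" using g0 by simp
          ultimately show "(\<Prod>i<k'. p (Suc i)) \<le> (\<Prod>i<k'. q i)"
            by (simp only: mult_le_cancel_left_pos)
        qed
        have "k' \<le> n" using kn k' by simp
        then obtain i0 where i0: "1 \<le> i0" "i0 \<le> k'" "\<forall>i<n. p (Suc i) = Y (t g 2) n i0 i"
          using Suc.IH tg k'1 rd(2) mq by blast
        have i0n: "i0 \<le> n" using i0(2) \<open>k' \<le> n\<close> by simp
        have "\<forall>i<Suc n. p i = Y g (Suc n) (Suc i0) i"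
        proof (intro allI impI)
          fix i assume "i < Suc n"
          then show "p i = Y g (Suc n) (Suc i0) i"
            using Y_shift[OF g1 i0(1) i0n] rd(1) i0(3) by (cases i) auto
        qed
        then show ?thesis using i0 k' by (intro exI[of _ "Suc i0"]) auto
      qed
    qed
  qed
qed

theorem proposition3p8:
  fixes g n k :: nat and x :: "real list"
  assumes "g \<ge> 1" and "n \<ge> 3" and "1 \<le> k" and "k \<le> n"
    and "x \<in> A g n"
    and "\<forall>z \<in> A g n. f k x \<le> f k z"
  shows "\<exists>i0. 1 \<le> i0 \<and> i0 \<le> k \<and> x = y g n i0"
proof -
  have n1: "n \<ge> 1" using assms by simp
  have len: "length x = n" using assms(5) unfolding A_def by simp
  define p where "p i = x ! i" for i
  have xp: "x = map p [0..<n]" unfolding p_def using map_nth[of x] len by simp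
  have af: "AF g n p" using assms(5) A_iff[OF n1, of p] xp by simp
  have mn: "\<forall>q. AF g n q \<longrightarrow> (\<Prod>i<k. p i) \<le> (\<Prod>i<k. q i)"
  proof (intro allI impI)
    fix q assume "AF g n q"
    then have "map q [0..<n] \<in> A g n" using A_iff[OF n1] by simp
    then have "f k x \<le> f k (map q [0..<n])" using assms(6) by blast
    then show "(\<Prod>i<k. p i) \<le> (\<Prod>i<k. q i)" using f_map[OF assms(4)] xp by simp
  qed
  obtain i0 where i0: "1 \<le> i0" "i0 \<le> k" "\<forall>i<n. p i = Y g n i0 i"
    using main[of n] assms(1,3,4) af mn by blast
  have "x = map (Y g n i0) [0..<n]" unfolding xp using i0(3) by simp
  also have "\<dots> = y g n i0" using y_map[of i0 n g] i0 assms(4) by simp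
  finally show ?thesis using i0 by blast
qed

end
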